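(* For every positive integer $k$ there exists a finite simple graph $G$ such that $\chi(G)-\pi(G)\ge 2^k$.
   Context: An orthogonal vector $d$-coloring of a graph $G$ is an assignment $f:V(G)\to\mathbb{R}^d\setminus\{0\}$ such that $f(u)\perp f(v)$ whenever $uv\in E(G)$; the orthogonal number $\pi(G)$ is the minimum $d$ for which such a coloring exists. $\chi(G)$ is the chromatic number. *)

theory Defs
  imports Complex_Main
begin

definition simple_graph :: "'a set \<Rightarrow> ('a \<Rightarrow> 'a \<Rightarrow> bool) \<Rightarrow> bool" where
  "simple_graph V E \<longleftrightarrow> finite V \<and> (\<forall>u v. E u v \<longrightarrow> u \<in> V \<and> v \<in> V)
     \<and> (\<forall>u v. E u v \<longrightarrow> E v u) \<and> (\<forall>v. \<not> E v v)"

definition proper_coloring :: "'a set \<Rightarrow> ('a \<Rightarrow> 'a \<Rightarrow> bool) \<Rightarrow> nat \<Rightarrow> ('a \<Rightarrow> nat) \<Rightarrow> bool" where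
  "proper_coloring V E k c \<longleftrightarrow> (\<forall>v\<in>V. c v < k) \<and> (\<forall>u\<in>V. \<forall>v\<in>V. E u v \<longrightarrow> c u \<noteq> c v)"

definition chromatic_number :: "'a set \<Rightarrow> ('a \<Rightarrow> 'a \<Rightarrow> bool) \<Rightarrow> nat" where
  "chromatic_number V E = (LEAST k. \<exists>c. proper_coloring V E k c)"

text \<open>Vectors of R^d are represented as functions nat => real supported on {0..<d};
  the standard inner product is the sum over coordinates i < d.\<close>
definition orth_vector_coloring :: "'a set \<Rightarrow> ('a \<Rightarrow> 'a \<Rightarrow> bool) \<Rightarrow> nat \<Rightarrow> ('a \<Rightarrow> nat \<Rightarrow> real) \<Rightarrow> bool" where
  "orth_vector_coloring V E d f \<longleftrightarrow>
     (\<forall>v\<in>V. (\<forall>i\<ge>d. f v i = 0) \<and> (\<exists>i<d. f v i \<noteq> 0))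
     \<and> (\<forall>u\<in>V. \<forall>v\<in>V. E u v \<longrightarrow> (\<Sum>i<d. f u i * f v i) = 0)"

definition orthogonal_number :: "'a set \<Rightarrow> ('a \<Rightarrow> 'a \<Rightarrow> bool) \<Rightarrow> nat" where
  "orthogonal_number V E = (LEAST d. \<exists>f. orth_vector_coloring V E d f)"

end

theory Submission imports Defs begin

definition vl :: "int list list" where
 "vl = [[0,0,0,1],[0,0,1,0],[1,1,0,0],[1,-1,0,0],[0,1,0,0],[1,0,1,0],[1,0,-1,0],
        [1,-1,1,-1],[1,-1,-1,1],[0,0,1,1],[1,1,1,1],[0,1,0,-1],[1,0,0,1],[1,0,0,-1],
        [0,1,-1,0],[1,1,-1,1],[1,1,1,-1],[-1,1,1,1]]"

definition bl :: "nat list list" where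
 "bl = [[0,1,2,3],[0,4,5,6],[7,8,2,9],[7,10,6,11],[1,4,12,13],[8,10,13,14],
        [15,16,3,9],[15,17,5,11],[16,17,12,14]]"

definition B :: "nat \<Rightarrow> nat set" where "B j = set (bl ! j)"

definition E0 :: "nat \<Rightarrow> nat \<Rightarrow> bool" where
 "E0 a b \<longleftrightarrow> a \<noteq> b \<and> (\<exists>j<9. a \<in> B j \<and> b \<in> B j)"

definition cab :: "nat \<Rightarrow> nat \<Rightarrow> real" where "cab a i = real_of_int (vl ! a ! i)"

lemma check_orth: "list_all (\<lambda>j. list_all (\<lambda>a. list_all (\<lambda>b. a = b \<or>
   (\<Sum>i\<leftarrow>[0..<4]. vl!a!i * vl!b!i) = 0) (bl!j)) (bl!j)) [0..<9]"
  by code_simp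

lemma check_nz: "list_all (\<lambda>a. list_ex (\<lambda>i. vl!a!i \<noteq> 0) [0..<4]) [0..<18]"
  by code_simp

lemma check_cnt: "list_all (\<lambda>a. length (filter (\<lambda>j. a \<in> set (bl!j)) [0..<9]) = 2) [0..<18]"
  by code_simp

lemma check_bound: "list_all (\<lambda>j. set (bl!j) \<subseteq> {..<18}) [0..<9]"
  by code_simp


lemma orth0: assumes "E0 a b" shows "(\<Sum>i<4. cab a i * cab b i) = 0"
proof -
  from assms obtain j where j: "j<9" "a \<in> set (bl!j)" "b \<in> set (bl!j)" "a \<noteq> b"
    unfolding E0_def B_def by auto
  from check_orth j have "(\<Sum>i\<leftarrow>[0..<4]. vl!a!i * vl!b!i) = 0"
    unfolding list_all_iff by (metis atLeastLessThan_iff le0 set_upt)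
  hence "(\<Sum>i<4. vl!a!i * vl!b!i) = 0"
    by (simp add: sum_list_sum_nth atLeast0LessThan)
  hence "real_of_int (\<Sum>i<4. vl!a!i * vl!b!i) = 0" by simp
  thus ?thesis unfolding cab_def by simp
qed

lemma nz0: assumes "a < 18" shows "\<exists>i<4. cab a i \<noteq> 0"
proof -
  have "\<exists>i\<in>{0..<4}. vl ! a ! i \<noteq> 0" using check_nz assms by (auto simp: list_all_iff list_ex_iff)
  thus ?thesis by (auto simp: cab_def)
qed

lemma cnt0: assumes "a < 18" shows "card {j\<in>{..<9}. a \<in> B j} = 2"
proof -
  have "length (filter (\<lambda>j. a \<in> set (bl!j)) [0..<9]) = 2"
    using check_cnt assms by (auto simp: list_all_iff)
  moreover have "length (filter (\<lambda>j. a \<in> set (bl!j)) [0..<9]) = card ({j. a \<in> set (bl!j)} \<inter> set [0..<9])"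
    by (rule distinct_length_filter) simp
  moreover have "{j. a \<in> set (bl!j)} \<inter> set [0..<9] = {j\<in>{..<9}. a \<in> B j}"
    by (auto simp: B_def)
  ultimately show ?thesis by simp
qed

lemma alpha0:
  assumes T: "T \<subseteq> {..<18}" and ind: "\<forall>a\<in>T. \<forall>b\<in>T. \<not> E0 a b"
  shows "card T \<le> 4"
proof -
  have fin: "finite T" using T finite_subset by blast
  have "(\<Sum>a\<in>T. \<Sum>j<9. (if a \<in> B j then 1 else 0::nat)) = (\<Sum>a\<in>T. 2::nat)"
  proof (rule sum.cong)
    fix a assume "a \<in> T"
    hence "a < 18" using T by auto
    have "(\<Sum>j<9. (if a \<in> B j then 1 else 0::nat)) = card ({..<9} \<inter> {j. a \<in> B j})"
      by (simp add: sum.If_cases)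
    also have "{..<9} \<inter> {j. a \<in> B j} = {j\<in>{..<9}. a \<in> B j}" by auto
    finally show "(\<Sum>j<9. (if a \<in> B j then 1 else 0::nat)) = 2" using cnt0[OF \<open>a<18\<close>] by simp
  qed simp
  hence "2 * card T = (\<Sum>a\<in>T. \<Sum>j<9. (if a \<in> B j then 1 else 0::nat))"
    by simp
  also have "\<dots> = (\<Sum>j<9. \<Sum>a\<in>T. (if a \<in> B j then 1 else 0::nat))"
    by (rule sum.swap)
  also have "\<dots> = (\<Sum>j<9. card (T \<inter> B j))"
    using fin by (simp add: sum.If_cases Int_def)
  also have "\<dots> \<le> (\<Sum>j<(9::nat). 1)"
  proof (rule sum_mono)
    fix j :: nat assume "j \<in> {..<9}"
    hence "\<forall>a\<in>T \<inter> B j. \<forall>b\<in>T \<inter> B j. a = b" using ind unfolding E0_def by auto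
    thus "card (T \<inter> B j) \<le> 1" using fin by (simp add: card_le_Suc0_iff_eq)
  qed
  finally show ?thesis by simp
qed


definition GE :: "nat \<Rightarrow> nat \<Rightarrow> nat \<Rightarrow> bool" where
 "GE m u v \<longleftrightarrow> u < 18*m \<and> v < 18*m \<and> u \<noteq> v \<and> (u div 18 \<noteq> v div 18 \<or> E0 (u mod 18) (v mod 18))"

definition Gf :: "nat \<Rightarrow> nat \<Rightarrow> nat \<Rightarrow> real" where
 "Gf m v i = (if i < 4*m \<and> i div 4 = v div 18 then cab (v mod 18) (i mod 4) else 0)"

lemma G_simple: "simple_graph {..<18*m} (GE m)"
  unfolding simple_graph_def GE_def E0_def by auto

lemma G_orth: "orth_vector_coloring {..<18*m} (GE m) (4*m) (Gf m)"
  unfolding orth_vector_coloring_def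
proof (intro conjI ballI allI impI)
  fix v i assume "v \<in> {..<18*m}" "4*m \<le> i" thus "Gf m v i = 0" by (simp add: Gf_def)
next
  fix v assume v: "v \<in> {..<18*m}"
  obtain r where r: "r < 4" "cab (v mod 18) r \<noteq> 0" using nz0[of "v mod 18"] by auto
  have q: "v div 18 < m" using v by (simp add: less_mult_imp_div_less mult.commute)
  let ?i = "(v div 18)*4 + r"
  have "?i < 4*m" using q r by linarith
  moreover have "Gf m v ?i \<noteq> 0" using r q \<open>?i < 4*m\<close> by (simp add: Gf_def)
  ultimately show "\<exists>i<4*m. Gf m v i \<noteq> 0" by blast
next
  fix u v assume u: "u \<in> {..<18*m}" and v: "v \<in> {..<18*m}" and e: "GE m u v"
  show "(\<Sum>i<4*m. Gf m u i * Gf m v i) = 0"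
  proof (cases "u div 18 = v div 18")
    case False
    hence "\<And>i. Gf m u i * Gf m v i = 0" by (simp add: Gf_def)
    thus ?thesis by (simp del: mult_eq_0_iff)
  next
    case True
    define q where "q = u div 18"
    define a where "a = u mod 18"
    define b where "b = v mod 18"
    have E: "E0 a b" using e True unfolding GE_def a_def b_def by auto
    have q: "q < m" using u by (simp add: q_def less_mult_imp_div_less mult.commute)
    define g where "g i = (if i div 4 = q then cab a (i mod 4) * cab b (i mod 4) else 0)" for i
    have "(\<Sum>i<4*m. Gf m u i * Gf m v i) = (\<Sum>i<m*4. g i)"
      by (intro sum.cong) (auto simp: Gf_def g_def q_def a_def b_def True)
    also have "\<dots> = (\<Sum>p<m. \<Sum>i\<in>{p*4..<p*4+4}. g i)"
      by (rule sum.nat_group[symmetric])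
    also have "\<dots> = (\<Sum>p<m. if p = q then (\<Sum>r<4. cab a r * cab b r) else 0)"
    proof (rule sum.cong)
      fix p assume "p \<in> {..<m}"
      have "(\<Sum>i\<in>{p*4..<p*4+4}. g i) = (\<Sum>r<4. g (r + p*4))"
        using sum.shift_bounds_nat_ivl[of g 0 "p*4" 4] by (simp add: atLeast0LessThan add.commute)
      also have "\<dots> = (\<Sum>r<4. if p = q then cab a r * cab b r else 0)"
        by (intro sum.cong) (auto simp: g_def)
      finally show "(\<Sum>i\<in>{p*4..<p*4+4}. g i) = (if p = q then (\<Sum>r<4. cab a r * cab b r) else 0)"
        by simp
    qed simp
    also have "\<dots> = (\<Sum>r<4. cab a r * cab b r)" using q by simp
    also have "\<dots> = 0" using orth0[OF E] .
    finally show ?thesis .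
  qed
qed

lemma G_pi: "orthogonal_number {..<18*m} (GE m) \<le> 4*m"
  unfolding orthogonal_number_def using G_orth by (blast intro: Least_le)

lemma G_alpha:
  assumes S: "S \<subseteq> {..<18*m}" and ind: "\<forall>u\<in>S. \<forall>v\<in>S. \<not> GE m u v"
  shows "card S \<le> 4"
proof (cases "S = {}")
  case True thus ?thesis by simp
next
  case False
  then obtain w where w: "w \<in> S" by auto
  have same: "\<forall>u\<in>S. u div 18 = w div 18" using ind S w unfolding GE_def by blast
  have inj: "inj_on (\<lambda>u. u mod 18) S"
  proof (rule inj_onI)
    fix x y assume "x \<in> S" "y \<in> S" "x mod 18 = y mod 18"
    thus "x = y" using same by (metis div_mod_decomp)
  qed
  have "card ((\<lambda>u. u mod 18) ` S) \<le> 4"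
  proof (rule alpha0)
    show "(\<lambda>u. u mod 18) ` S \<subseteq> {..<18}" by auto
    show "\<forall>a\<in>(\<lambda>u. u mod 18) ` S. \<forall>b\<in>(\<lambda>u. u mod 18) ` S. \<not> E0 a b"
    proof (intro ballI)
      fix a b assume "a \<in> (\<lambda>u. u mod 18) ` S" "b \<in> (\<lambda>u. u mod 18) ` S"
      then obtain x y where xy: "x \<in> S" "y \<in> S" "a = x mod 18" "b = y mod 18" by auto
      show "\<not> E0 a b"
      proof
        assume E: "E0 a b"
        hence "x \<noteq> y" using xy unfolding E0_def by auto
        hence "GE m x y" using E xy S unfolding GE_def by auto
        thus False using ind xy by auto
      qed
    qed
  qed
  thus ?thesis using card_image[OF inj] by simp
qed

lemma G_chi: "18*m \<le> 4 * chromatic_number {..<18*m} (GE m)"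
proof -
  have ex: "\<exists>K c. proper_coloring {..<18*m} (GE m) K c"
    by (rule exI[of _ "18*m"], rule exI[of _ id]) (auto simp: proper_coloring_def GE_def)
  define K where "K = chromatic_number {..<18*m} (GE m)"
  have "\<exists>c. proper_coloring {..<18*m} (GE m) K c"
    unfolding K_def chromatic_number_def using ex by (rule LeastI_ex)
  then obtain c where c: "proper_coloring {..<18*m} (GE m) K c" by blast
  have sub: "{..<18*m} \<subseteq> (\<Union>j<K. {v\<in>{..<18*m}. c v = j})"
    using c unfolding proper_coloring_def by auto
  have "card {..<18*m} \<le> card (\<Union>j<K. {v\<in>{..<18*m}. c v = j})"
    by (rule card_mono[OF _ sub]) auto
  also have "\<dots> \<le> (\<Sum>j<K. card {v\<in>{..<18*m}. c v = j})"
    by (rule card_UN_le) simp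
  also have "\<dots> \<le> (\<Sum>j<K. 4)"
  proof (rule sum_mono)
    fix j assume "j \<in> {..<K}"
    show "card {v\<in>{..<18*m}. c v = j} \<le> 4"
      by (rule G_alpha) (use c in \<open>fastforce simp: proper_coloring_def\<close>)+
  qed
  finally show ?thesis by (simp add: K_def mult.commute)
qed

theorem mainTheorem4:
  fixes k :: nat
  assumes "k \<ge> 1"
  shows "\<exists>(V :: nat set) E. simple_graph V E \<and>
           int (chromatic_number V E) - int (orthogonal_number V E) \<ge> 2 ^ k"
proof (intro exI conjI)
  define m :: nat where "m = 2^(k+1)"
  show "simple_graph {..<18*m} (GE m)" by (rule G_simple)
  have a: "18*m \<le> 4 * chromatic_number {..<18*m} (GE m)" by (rule G_chi)
  have b: "orthogonal_number {..<18*m} (GE m) \<le> 4*m" by (rule G_pi)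
  have m: "int m = 2 * 2^k" by (simp add: m_def)
  from a b m show "int (chromatic_number {..<18*m} (GE m)) - int (orthogonal_number {..<18*m} (GE m)) \<ge> 2^k"
    by linarith
qed

end
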